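(* Assume $b_1\ne b_2$, $c_1\ne c_2$. If $\check{f}$ has at least one root, then exactly one of the following is true. 1. $\check{f}$ has exactly two roots $x_0$ and $x_1$ at which it changes sign, and $\widehat{f}$ has no roots. The derivative $\check{f}'$ is nonzero at $x_0$ and $x_1$. 2. $\check{f}$ has exactly one root $x_0$ at which it does not change sign, and $\widehat{f}$ has no roots. The derivative $\check{f}'$ also has a root at $x_0$. 3. $\check{f}$ has exactly one root $x_0$ at which it changes sign, and $\widehat{f}$ also has exactly one root $x_1$ at which it changes sign. The derivatives $\check{f}'(x_0)$ and $\widehat{f}'(x_1)$ are nonzero.
   Context: A function $f:\mathbb{R}^+\to\mathbb{R}^+$ is called strongly hyperbolic if: (1) $\lim_{x\to 0+} f(x)=+\infty$ and $\lim_{x\to+\infty} f(x)=0$; (2) $f$ is strictly convex; (3) for each $b\in\mathbb{R}$, $\lim_{x\to+\infty} f(x+b)/f(x)=1$; (4) $f$ is differentiable; (5) $\ln|f'(x)|$ is strictly convex. Let $f_1,f_2$ be strongly hyperbolic functions, let $a_1,a_2>0$ and $b_1,b_2,c_1,c_2\in\mathbb{R}$. Define $\check{f}:(\max\{-b_1,-b_2\},+\infty)\to\mathbb{R}$, $\check{f}(x)=a_1f_1(x+b_1)+c_1-a_2f_1(x+b_2)-c_2$, and $\widehat{f}:(-\infty,\min\{-b_1,-b_2\})\to\mathbb{R}$, $\widehat{f}(x)=-a_1f_2(-x-b_1)+c_1+a_2f_2(-x-b_2)-c_2$. *)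

theory Defs
  imports "HOL-Analysis.Analysis"
begin

definition strictly_convex_on :: "real set \<Rightarrow> (real \<Rightarrow> real) \<Rightarrow> bool" where
  "strictly_convex_on S f \<longleftrightarrow> (\<forall>x\<in>S. \<forall>y\<in>S. \<forall>t::real. x \<noteq> y \<and> 0 < t \<and> t < 1 \<longrightarrow>
      f ((1 - t) * x + t * y) < (1 - t) * f x + t * f y)"

text \<open>Strongly hyperbolic functions f : (0,oo) -> (0,oo); values outside (0,oo) are irrelevant.\<close>
definition strongly_hyperbolic :: "(real \<Rightarrow> real) \<Rightarrow> bool" where
  "strongly_hyperbolic f \<longleftrightarrow>
     (\<forall>x>0. f x > 0) \<and>
     filterlim f at_top (at_right 0) \<and>
     (f \<longlongrightarrow> 0) at_top \<and>
     strictly_convex_on {0<..} f \<and>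
     (\<forall>b::real. ((\<lambda>x. f (x + b) / f x) \<longlongrightarrow> 1) at_top) \<and>
     (\<forall>x>0. f differentiable (at x)) \<and>
     strictly_convex_on {0<..} (\<lambda>x. ln \<bar>deriv f x\<bar>)"

definition fcheck :: "(real \<Rightarrow> real) \<Rightarrow> real \<Rightarrow> real \<Rightarrow> real \<Rightarrow> real \<Rightarrow> real \<Rightarrow> real \<Rightarrow> real \<Rightarrow> real" where
  "fcheck f1 a1 a2 b1 b2 c1 c2 x = a1 * f1 (x + b1) + c1 - a2 * f1 (x + b2) - c2"

definition fhat :: "(real \<Rightarrow> real) \<Rightarrow> real \<Rightarrow> real \<Rightarrow> real \<Rightarrow> real \<Rightarrow> real \<Rightarrow> real \<Rightarrow> real \<Rightarrow> real" where
  "fhat f2 a1 a2 b1 b2 c1 c2 x = - a1 * f2 (- x - b1) + c1 + a2 * f2 (- x - b2) - c2"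

definition fcheck_roots :: "(real \<Rightarrow> real) \<Rightarrow> real \<Rightarrow> real \<Rightarrow> real \<Rightarrow> real \<Rightarrow> real \<Rightarrow> real \<Rightarrow> real set" where
  "fcheck_roots f1 a1 a2 b1 b2 c1 c2 =
     {x. max (- b1) (- b2) < x \<and> fcheck f1 a1 a2 b1 b2 c1 c2 x = 0}"

definition fhat_roots :: "(real \<Rightarrow> real) \<Rightarrow> real \<Rightarrow> real \<Rightarrow> real \<Rightarrow> real \<Rightarrow> real \<Rightarrow> real \<Rightarrow> real set" where
  "fhat_roots f2 a1 a2 b1 b2 c1 c2 =
     {x. x < min (- b1) (- b2) \<and> fhat f2 a1 a2 b1 b2 c1 c2 x = 0}"

definition changes_sign_at :: "(real \<Rightarrow> real) \<Rightarrow> real \<Rightarrow> bool" where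
  "changes_sign_at g x \<longleftrightarrow> (\<exists>e>0.
     ((\<forall>y\<in>{x - e<..<x}. g y < 0) \<and> (\<forall>y\<in>{x<..<x + e}. g y > 0)) \<or>
     ((\<forall>y\<in>{x - e<..<x}. g y > 0) \<and> (\<forall>y\<in>{x<..<x + e}. g y < 0)))"

definition keeps_sign_at :: "(real \<Rightarrow> real) \<Rightarrow> real \<Rightarrow> bool" where
  "keeps_sign_at g x \<longleftrightarrow> (\<exists>e>0.
     (\<forall>y\<in>{x - e<..<x + e} - {x}. g y > 0) \<or>
     (\<forall>y\<in>{x - e<..<x + e} - {x}. g y < 0))"

end

theory Submission imports Defs begin

lemma sc_convex:
  assumes "strictly_convex_on S f" "convex S" shows "convex_on S f"
proof (rule convex_onI[OF _ assms(2)])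
  fix t x y assume "(0::real) < t" "t < 1" "x \<in> S" "y \<in> S"
  then show "f ((1 - t) *\<^sub>R x + t *\<^sub>R y) \<le> (1 - t) * f x + t * f y"
  proof (cases "x = y")
    case False
    have "f ((1-t)*x + t*y) < (1-t)*f x + t*f y"
      using assms(1) False \<open>0 < t\<close> \<open>t < 1\<close> \<open>x \<in> S\<close> \<open>y \<in> S\<close> unfolding strictly_convex_on_def by blast
    thus ?thesis by simp
  qed (simp add: algebra_simps)
qed

lemma sc_slope:
  assumes sc: "strictly_convex_on S f" and "a \<in> S" "c \<in> S" "a < b" "b < c"
  shows "(f b - f a) / (b - a) < (f c - f a) / (c - a)"
    and "(f c - f a) / (c - a) < (f c - f b) / (c - b)"
proof -
  define t where "t = (b - a) / (c - a)"
  have t: "0 < t" "t < 1" using assms by (auto simp: t_def field_simps)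
  have "t * (c - a) = b - a" using assms by (simp add: t_def)
  hence b: "b = (1 - t) * a + t * c" by (simp add: algebra_simps)
  have "f b < (1 - t) * f a + t * f c"
    using sc assms t unfolding strictly_convex_on_def b by auto
  hence "f b * (c - a) < ((1 - t) * f a + t * f c) * (c - a)"
    using assms by (intro mult_strict_right_mono) auto
  also have "\<dots> = ((1 - t) * (c - a)) * f a + (t * (c - a)) * f c" by (simp add: algebra_simps)
  also have "(1 - t) * (c - a) = c - b"
    using \<open>t * (c - a) = b - a\<close> by (auto simp: algebra_simps)
  also have "t * (c - a) = b - a" by fact
  finally have *: "f b * (c - a) < (c - b) * f a + (b - a) * f c" .
  show "(f b - f a) / (b - a) < (f c - f a) / (c - a)"
    using assms * by (simp add: field_simps)
  show "(f c - f a) / (c - a) < (f c - f b) / (c - b)"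
    using assms * by (simp add: field_simps)
qed

lemma sh_pos: "strongly_hyperbolic f \<Longrightarrow> x > 0 \<Longrightarrow> f x > 0"
  unfolding strongly_hyperbolic_def by auto

lemma sh_DERIV: "strongly_hyperbolic f \<Longrightarrow> x > 0 \<Longrightarrow> DERIV f x :> deriv f x"
  unfolding strongly_hyperbolic_def by (auto simp: DERIV_deriv_iff_real_differentiable)

lemma sh_cont: "strongly_hyperbolic f \<Longrightarrow> x > 0 \<Longrightarrow> isCont f x"
  using sh_DERIV DERIV_isCont by blast

lemma sh_deriv_neg:
  assumes sh: "strongly_hyperbolic f" and x: "x > 0"
  shows "deriv f x < 0"
proof (rule ccontr)
  assume "\<not> deriv f x < 0"
  hence d: "deriv f x \<ge> 0" by simp
  have cv: "convex_on {0<..} f"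
    using sh by (intro sc_convex) (auto simp: strongly_hyperbolic_def)
  have tan: "f y - f x \<ge> deriv f x * (y - x)" if "y > 0" for y
    by (rule convex_on_imp_above_tangent[OF cv]) 
       (use x that sh_DERIV[OF sh x] in \<open>auto simp: interior_open intro: has_field_derivative_at_within\<close>)
  have "(f \<longlongrightarrow> 0) at_top" using sh by (simp add: strongly_hyperbolic_def)
  hence "eventually (\<lambda>y. f y < f x) at_top"
    using sh_pos[OF sh x] by (intro order_tendstoD(2)) auto
  then obtain N where N: "\<And>y. y \<ge> N \<Longrightarrow> f y < f x" by (auto simp: eventually_at_top_linorder)
  define y where "y = max N (x + 1)"
  have "f y < f x" using N y_def by auto
  moreover have "f y - f x \<ge> deriv f x * (y - x)" using tan x y_def by auto
  moreover have "deriv f x * (y - x) \<ge> 0" using d y_def by auto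
  ultimately show False by linarith
qed

lemma sh_decr:
  assumes sh: "strongly_hyperbolic f" and "0 < x" "x < y"
  shows "f y < f x"
proof (rule DERIV_neg_imp_decreasing_open[OF assms(3)])
  fix z assume "x < z" "z < y"
  thus "\<exists>d. DERIV f z :> d \<and> d < 0" using assms sh_DERIV sh_deriv_neg by (intro exI[of _ "deriv f z"]) auto
next
  show "continuous_on {x..y} f" using assms sh_cont by (intro continuous_at_imp_continuous_on) auto
qed

lemma sh_D_mono:
  assumes sh: "strongly_hyperbolic f" and "q < p" "-q < x" "x < y"
  shows "ln \<bar>deriv f (x+p)\<bar> - ln \<bar>deriv f (x+q)\<bar> < ln \<bar>deriv f (y+p)\<bar> - ln \<bar>deriv f (y+q)\<bar>"
proof -
  define h where "h = (\<lambda>x. ln \<bar>deriv f x\<bar>)"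
  have sc: "strictly_convex_on {0<..} h" using sh by (simp add: strongly_hyperbolic_def h_def)
  have 1: "(h (x+p) - h (x+q)) / ((x+p) - (x+q)) < (h (y+p) - h (x+q)) / ((y+p) - (x+q))"
    using sc_slope(1)[OF sc, where a="x+q" and b="x+p" and c="y+p"] assms by auto
  have 2: "(h (y+p) - h (x+q)) / ((y+p) - (x+q)) < (h (y+p) - h (y+q)) / ((y+p) - (y+q))"
    using sc_slope(2)[OF sc, where a="x+q" and b="y+q" and c="y+p"] assms by auto
  have "(h (x+p) - h (x+q)) / (p - q) < (h (y+p) - h (y+q)) / (p - q)"
    using 1 2 by simp
  thus ?thesis using assms unfolding h_def by (simp add: divide_strict_right_mono_neg divide_less_cancel)
qed

definition gf :: "(real \<Rightarrow> real) \<Rightarrow> real \<Rightarrow> real \<Rightarrow> real \<Rightarrow> real \<Rightarrow> real \<Rightarrow> real \<Rightarrow> real" where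
  "gf f A B p q c x = A * f (x + p) - B * f (x + q) + c"

definition gd :: "(real \<Rightarrow> real) \<Rightarrow> real \<Rightarrow> real \<Rightarrow> real \<Rightarrow> real \<Rightarrow> real \<Rightarrow> real" where
  "gd f A B p q x = A * deriv f (x + p) - B * deriv f (x + q)"

lemma g_DERIV:
  assumes sh: "strongly_hyperbolic f" and "q < p" "-q < x"
  shows "DERIV (gf f A B p q c) x :> gd f A B p q x"
proof -
  have 1: "DERIV (\<lambda>x. f (x + p)) x :> deriv f (x + p)"
    using sh_DERIV[OF sh, of "x+p"] assms by (simp add: DERIV_shift)
  have 2: "DERIV (\<lambda>x. f (x + q)) x :> deriv f (x + q)"
    using sh_DERIV[OF sh, of "x+q"] assms by (simp add: DERIV_shift)
  show ?thesis unfolding gf_def[abs_def] gd_def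
    by (rule derivative_eq_intros 1 2 refl)+ simp
qed

lemma g_cont:
  assumes sh: "strongly_hyperbolic f" and "q < p" "-q < a"
  shows "continuous_on {a..b} (gf f A B p q c)"
  by (intro continuous_at_imp_continuous_on ballI DERIV_isCont[OF g_DERIV[OF sh assms(2)]])
     (use assms(3) in auto)

lemma g_sign:
  assumes sh: "strongly_hyperbolic f" and "q < p" "-q < x" "A > 0" "B > 0"
  shows "gd f A B p q x > 0 \<longleftrightarrow> ln \<bar>deriv f (x+p)\<bar> - ln \<bar>deriv f (x+q)\<bar> < ln B - ln A"
    and "gd f A B p q x < 0 \<longleftrightarrow> ln \<bar>deriv f (x+p)\<bar> - ln \<bar>deriv f (x+q)\<bar> > ln B - ln A"
proof -
  have n1: "deriv f (x+p) < 0" and n2: "deriv f (x+q) < 0" using sh_deriv_neg[OF sh] assms by auto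
  define u where "u = - deriv f (x+p)"
  define v where "v = - deriv f (x+q)"
  have u: "u > 0" and v: "v > 0" using n1 n2 u_def v_def by auto
  have e: "gd f A B p q x = B * v - A * u" unfolding gd_def u_def v_def by simp
  have l: "ln \<bar>deriv f (x+p)\<bar> - ln \<bar>deriv f (x+q)\<bar> = ln u - ln v"
    using n1 n2 u_def v_def by simp
  have "B * v - A * u > 0 \<longleftrightarrow> ln (A * u) < ln (B * v)" using u v assms by simp
  also have "\<dots> \<longleftrightarrow> ln u - ln v < ln B - ln A" using u v assms by (auto simp: ln_mult)
  finally show "gd f A B p q x > 0 \<longleftrightarrow> ln \<bar>deriv f (x+p)\<bar> - ln \<bar>deriv f (x+q)\<bar> < ln B - ln A"
    using e l by simp
  have "B * v - A * u < 0 \<longleftrightarrow> ln (B * v) < ln (A * u)" using u v assms by simp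
  also have "\<dots> \<longleftrightarrow> ln u - ln v > ln B - ln A" using u v assms by (auto simp: ln_mult)
  finally show "gd f A B p q x < 0 \<longleftrightarrow> ln \<bar>deriv f (x+p)\<bar> - ln \<bar>deriv f (x+q)\<bar> > ln B - ln A"
    using e l by simp
qed

lemma g_shape:
  assumes sh: "strongly_hyperbolic f" and pq: "q < p" and AB: "A > 0" "B > 0"
  shows "(\<forall>x>-q. gd f A B p q x > 0) \<or>
         (\<exists>m\<ge>-q. (\<forall>x. -q < x \<and> x < m \<longrightarrow> gd f A B p q x > 0) \<and> (\<forall>x>m. gd f A B p q x < 0))"
proof -
  define D where "D = (\<lambda>x. ln \<bar>deriv f (x+p)\<bar> - ln \<bar>deriv f (x+q)\<bar>)"
  define L where "L = ln B - ln A"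
  have Dm: "D x < D y" if "-q < x" "x < y" for x y
    using sh_D_mono[OF sh pq that] by (simp add: D_def)
  have s1: "gd f A B p q x > 0 \<longleftrightarrow> D x < L" if "-q < x" for x
    using g_sign(1)[OF sh pq that AB] by (simp add: D_def L_def)
  have s2: "gd f A B p q x < 0 \<longleftrightarrow> D x > L" if "-q < x" for x
    using g_sign(2)[OF sh pq that AB] by (simp add: D_def L_def)
  show ?thesis
  proof (cases "\<forall>x>-q. D x < L")
    case True thus ?thesis using s1 by auto
  next
    case False
    define T where "T = {x. -q < x \<and> D x \<ge> L}"
    have ne: "T \<noteq> {}" using False by (auto simp: T_def)
    have bdd: "bdd_below T" by (auto simp: T_def bdd_below_def intro!: exI[of _ "-q"])
    define m where "m = Inf T"
    have m1: "m \<ge> -q" unfolding m_def using ne by (intro cInf_greatest) (auto simp: T_def)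
    have m2: "gd f A B p q x > 0" if "-q < x" "x < m" for x
    proof -
      have "x \<notin> T" using cInf_lower[OF _ bdd, of x] that m_def by auto
      thus ?thesis using that s1 by (auto simp: T_def)
    qed
    have m3: "gd f A B p q x < 0" if "x > m" for x
    proof -
      have "Inf T < x" using that unfolding m_def .
      then obtain z where z: "z \<in> T" "z < x" using cInf_less_iff[OF ne bdd, of x] by auto
      have "D z < D x" using z by (intro Dm) (auto simp: T_def)
      thus ?thesis using s2[of x] z by (auto simp: T_def)
    qed
    show ?thesis using m1 m2 m3 by blast
  qed
qed

lemma g_left:
  assumes sh: "strongly_hyperbolic f" and pq: "q < p" and AB: "A > 0" "B > 0" and x0: "-q < x0"
  shows "\<exists>x1. -q < x1 \<and> x1 < x0 \<and> gf f A B p q c x1 < M"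
proof -
  define K where "K = (A * f (p - q) + c - M) / B"
  have "filterlim f at_top (at_right 0)" using sh by (simp add: strongly_hyperbolic_def)
  hence "eventually (\<lambda>y. K < f y) (at_right 0)" by (simp add: filterlim_at_top_dense)
  then obtain b where b: "b > 0" "\<And>y. y > 0 \<Longrightarrow> y < b \<Longrightarrow> K < f y"
    by (auto simp: eventually_at_right_field)
  define y where "y = min (b/2) ((x0+q)/2)"
  have y: "0 < y" "y < b" "y < x0 + q" using b x0 by (auto simp: y_def min_less_iff_disj)
  define x1 where "x1 = y - q"
  have "f (x1 + p) < f (p - q)" using sh_decr[OF sh] pq y by (simp add: x1_def)
  hence "A * f (x1 + p) < A * f (p - q)" using AB by simp
  moreover have "B * K < B * f (x1 + q)" using b y AB by (simp add: x1_def)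
  moreover have "B * K = A * f (p - q) + c - M" using AB by (simp add: K_def)
  ultimately have "gf f A B p q c x1 < M" unfolding gf_def by linarith
  thus ?thesis using y by (intro exI[of _ x1]) (auto simp: x1_def)
qed

lemma g_top:
  assumes sh: "strongly_hyperbolic f"
  shows "(gf f A B p q c \<longlongrightarrow> c) at_top"
proof -
  have f0: "(f \<longlongrightarrow> 0) at_top" using sh by (simp add: strongly_hyperbolic_def)
  have sh': "filterlim (\<lambda>x. x + r) at_top at_top" for r :: real
    using filterlim_tendsto_add_at_top[OF tendsto_const[of r] filterlim_ident] by (simp add: add.commute)
  have "((\<lambda>x. f (x + r)) \<longlongrightarrow> 0) at_top" for r
    by (rule filterlim_compose[OF f0 sh'])
  hence "((\<lambda>x. A * f (x + p) - B * f (x + q) + c) \<longlongrightarrow> A * 0 - B * 0 + c) at_top"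
    by (intro tendsto_intros) auto
  thus ?thesis by (simp add: gf_def[abs_def])
qed

lemma g_shape':
  assumes sh: "strongly_hyperbolic f" and pq: "q < p" and AB: "A > 0" "B > 0"
  shows "(\<forall>x>-q. gd f A B p q x > 0) \<or>
         (\<exists>m>-q. (\<forall>x. -q < x \<and> x < m \<longrightarrow> gd f A B p q x > 0) \<and> (\<forall>x>m. gd f A B p q x < 0))"
proof -
  have "False" if m: "\<forall>x>-q. gd f A B p q x < 0"
  proof -
    obtain x1 where x1: "-q < x1" "x1 < -q+1" "gf f A B p q 0 x1 < gf f A B p q 0 (-q+1)"
      using g_left[OF sh pq AB, of "-q+1" 0 "gf f A B p q 0 (-q+1)"] by auto
    have "gf f A B p q 0 x1 > gf f A B p q 0 (-q+1)"
    proof (rule DERIV_neg_imp_decreasing_open[OF x1(2)])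
      fix z assume "x1 < z" "z < -q+1"
      thus "\<exists>y. DERIV (gf f A B p q 0) z :> y \<and> y < 0"
        using g_DERIV[OF sh pq, of z] m x1 by (intro exI[of _ "gd f A B p q z"]) auto
    qed (rule g_cont[OF sh pq x1(1)])
    thus False using x1 by simp
  qed
  thus ?thesis using g_shape[OF sh pq AB] by (metis le_less)
qed

definition ONE :: "(real \<Rightarrow> real) \<Rightarrow> real set \<Rightarrow> bool" where
  "ONE G S \<longleftrightarrow> (\<exists>x0. {x\<in>S. G x = 0} = {x0} \<and> changes_sign_at G x0 \<and> (\<exists>D. DERIV G x0 :> D \<and> D \<noteq> 0))"

definition TWO :: "(real \<Rightarrow> real) \<Rightarrow> real set \<Rightarrow> bool" where
  "TWO G S \<longleftrightarrow> (\<exists>x0 x1. x0 \<noteq> x1 \<and> {x\<in>S. G x = 0} = {x0, x1} \<and> changes_sign_at G x0 \<and> changes_sign_at G x1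
      \<and> (\<exists>D. DERIV G x0 :> D \<and> D \<noteq> 0) \<and> (\<exists>D. DERIV G x1 :> D \<and> D \<noteq> 0))"

definition TOUCH :: "(real \<Rightarrow> real) \<Rightarrow> real set \<Rightarrow> bool" where
  "TOUCH G S \<longleftrightarrow> (\<exists>x0. {x\<in>S. G x = 0} = {x0} \<and> keeps_sign_at G x0 \<and> DERIV G x0 :> 0)"

lemma core_none:
  assumes sh: "strongly_hyperbolic f" and pq: "q < p" and AB: "A \<le> B" "B > 0" and c: "c < 0"
  shows "{x\<in>{-q<..}. gf f A B p q c x = 0} = {}"
proof -
  have "gf f A B p q c x < 0" if "-q < x" for x
  proof -
    have "A * f (x+p) \<le> B * f (x+p)" using AB sh_pos[OF sh, of "x+p"] that pq by (intro mult_right_mono) auto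
    also have "\<dots> < B * f (x+q)" using sh_decr[OF sh, of "x+q" "x+p"] that pq AB by auto
    finally show ?thesis using c by (simp add: gf_def)
  qed
  thus ?thesis by force
qed

lemma core:
  assumes sh: "strongly_hyperbolic f" and pq: "q < p" and AB: "A > 0" "B > 0"
  shows "(c > 0 \<longrightarrow> ONE (gf f A B p q c) {-q<..}) \<and>
         (c < 0 \<longrightarrow> {x\<in>{-q<..}. gf f A B p q c x = 0} \<noteq> {} \<longrightarrow> TWO (gf f A B p q c) {-q<..} \<or> TOUCH (gf f A B p q c) {-q<..})"
proof -
  define g where "g = gf f A B p q c"
  define g' where "g' = gd f A B p q"
  have gD: "DERIV g x :> g' x" if "-q < x" for x
    unfolding g_def g'_def using g_DERIV[OF sh pq that] .
  have inc: "g x < g y" if "-q < x" "x < y" "\<forall>z. x < z \<and> z < y \<longrightarrow> g' z > 0" for x y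
  proof (rule DERIV_pos_imp_increasing_open[OF that(2)])
    fix z assume "x < z" "z < y"
    thus "\<exists>d. DERIV g z :> d \<and> d > 0" using gD[of z] that by (intro exI[of _ "g' z"]) auto
  qed (unfold g_def, rule g_cont[OF sh pq that(1)])
  have dec: "g x > g y" if "-q < x" "x < y" "\<forall>z. x < z \<and> z < y \<longrightarrow> g' z < 0" for x y
  proof (rule DERIV_neg_imp_decreasing_open[OF that(2)])
    fix z assume "x < z" "z < y"
    thus "\<exists>d. DERIV g z :> d \<and> d < 0" using gD[of z] that by (intro exI[of _ "g' z"]) auto
  qed (unfold g_def, rule g_cont[OF sh pq that(1)])
  have gc: "continuous_on {a..b} g" if "-q < a" for a b
    using g_cont[OF sh pq that] by (simp add: g_def)
  have lim: "(g \<longlongrightarrow> c) at_top" unfolding g_def by (rule g_top[OF sh])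
  have left: "\<exists>x1. -q < x1 \<and> x1 < x0 \<and> g x1 < 0" if "-q < x0" for x0
    unfolding g_def using g_left[OF sh pq AB that] by blast
  from g_shape'[OF sh pq AB] show ?thesis unfolding g_def[symmetric] g'_def[symmetric]
  proof (elim disjE exE conjE)
    assume all: "\<forall>x>-q. g' x > 0"
    have incA: "g x < g y" if "-q < x" "x < y" for x y using inc[of x y] that all by auto
    have lec: "g x \<le> c" if "-q < x" for x
    proof (rule tendsto_lowerbound[OF lim])
      show "eventually (\<lambda>y. g x \<le> g y) at_top"
        using eventually_gt_at_top[of x] by eventually_elim (use incA[of x] that in \<open>auto intro: less_imp_le\<close>)
    qed simp
    have ltc: "g x < c" if "-q < x" for x using incA[of x "x+1"] lec[of "x+1"] that by force
    show "(c > 0 \<longrightarrow> ONE g {-q<..}) \<and> (c < 0 \<longrightarrow> {x\<in>{-q<..}. g x = 0} \<noteq> {} \<longrightarrow> TWO g {-q<..} \<or> TOUCH g {-q<..})"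
    proof (intro conjI impI)
      assume "c < 0" "{x\<in>{-q<..}. g x = 0} \<noteq> {}"
      thus "TWO g {-q<..} \<or> TOUCH g {-q<..}" using ltc by force
    next
      assume c0: "c > 0"
      obtain x1 where x1: "-q < x1" "x1 < -q+1" "g x1 < 0" using left[of "-q+1"] by auto
      have "eventually (\<lambda>y. g y > 0) at_top" using lim c0 by (rule order_tendstoD)
      then obtain N where N: "\<And>y. y \<ge> N \<Longrightarrow> g y > 0" by (auto simp: eventually_at_top_linorder)
      define x2 where "x2 = max N (-q+1)"
      have x2: "g x2 > 0" "x1 \<le> x2" using N x1 by (auto simp: x2_def)
      obtain x0 where x0: "x1 \<le> x0" "x0 \<le> x2" "g x0 = 0"
        using IVT'[of g x1 0 x2, OF _ _ _ gc[OF x1(1)]] x1 x2 by auto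
      have x0q: "-q < x0" using x0 x1 by simp
      have R: "{x\<in>{-q<..}. g x = 0} = {x0}"
      proof -
        have "y = x0" if "-q < y" "g y = 0" for y
          using incA[of y x0] incA[of x0 y] x0q x0 that by (cases y x0 rule: linorder_cases) auto
        thus ?thesis using x0q x0 by blast
      qed
      have "\<forall>y\<in>{x0 - (x0+q)<..<x0}. g y < 0" using incA[of _ x0] x0q x0 by auto
      moreover have "\<forall>y\<in>{x0<..<x0 + (x0+q)}. g y > 0" using incA[of x0] x0q x0 by auto
      ultimately have "changes_sign_at g x0" unfolding changes_sign_at_def
        using x0q by (intro exI[of _ "x0 + q"]) auto
      moreover have "\<exists>D. DERIV g x0 :> D \<and> D \<noteq> 0" using gD[OF x0q] all x0q by (intro exI[of _ "g' x0"]) auto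
      ultimately show "ONE g {-q<..}" unfolding ONE_def using R by blast
    qed
  next
    fix m assume m: "-q < m" and up: "\<forall>x. -q < x \<and> x < m \<longrightarrow> g' x > 0" and dn: "\<forall>x>m. g' x < 0"
    have incm: "g x < g y" if "-q < x" "x < y" "y \<le> m" for x y using inc[of x y] that up by auto
    have decm: "g x > g y" if "m \<le> x" "x < y" for x y using dec[of x y] that dn m by auto
    have gtc: "g x > c" if "m \<le> x" for x
    proof -
      have "c \<le> g (x+1)"
      proof (rule tendsto_upperbound[OF lim])
        show "eventually (\<lambda>y. g y \<le> g (x+1)) at_top"
          using eventually_gt_at_top[of "x+1"] by eventually_elim (use decm[of "x+1"] that in \<open>auto intro: less_imp_le\<close>)
      qed simp
      thus ?thesis using decm[of x "x+1"] that by simp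
    qed
    have le_m: "g x \<le> g m" if "-q < x" for x
      using incm[of x m] decm[of m x] that by (cases x m rule: linorder_cases) auto
    have first_root: "\<exists>x0. -q < x0 \<and> x0 < m \<and> g x0 = 0" if gm0: "g m > 0"
    proof -
      obtain x1 where x1: "-q < x1" "x1 < m" "g x1 < 0" using left[OF m] by auto
      obtain x0 where x0: "x1 \<le> x0" "x0 \<le> m" "g x0 = 0"
        using IVT'[of g x1 0 m, OF _ _ _ gc[OF x1(1)]] x1 gm0 by auto
      thus ?thesis using x1 gm0 by (intro exI[of _ x0]) (auto simp: le_less)
    qed
    have ch0: "changes_sign_at g x0" if "-q < x0" "x0 < m" "g x0 = 0" for x0
    proof -
      have "\<forall>y\<in>{x0 - min (x0+q) (m-x0)<..<x0}. g y < 0" using incm[of _ x0] that by auto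
      moreover have "\<forall>y\<in>{x0<..<x0 + min (x0+q) (m-x0)}. g y > 0" using incm[of x0] that by auto
      ultimately show ?thesis unfolding changes_sign_at_def using that
        by (intro exI[of _ "min (x0+q) (m-x0)"]) auto
    qed
    show "(c > 0 \<longrightarrow> ONE g {-q<..}) \<and> (c < 0 \<longrightarrow> {x\<in>{-q<..}. g x = 0} \<noteq> {} \<longrightarrow> TWO g {-q<..} \<or> TOUCH g {-q<..})"
    proof (intro conjI impI)
      assume c0: "c > 0"
      obtain x0 where x0: "-q < x0" "x0 < m" "g x0 = 0" using first_root gtc[of m] c0 by auto
      have R: "{x\<in>{-q<..}. g x = 0} = {x0}"
      proof -
        have "y = x0" if y: "-q < y" "g y = 0" for y
        proof (cases "y \<le> m")
          case True thus ?thesis using incm[of y x0] incm[of x0 y] x0 y by (cases y x0 rule: linorder_cases) auto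
        next
          case False thus ?thesis using gtc[of y] y c0 by auto
        qed
        thus ?thesis using x0 by blast
      qed
      have "\<exists>D. DERIV g x0 :> D \<and> D \<noteq> 0" using gD[of x0] up x0 by (intro exI[of _ "g' x0"]) auto
      thus "ONE g {-q<..}" unfolding ONE_def using R ch0[OF x0] by blast
    next
      assume c0: "c < 0" and S: "{x\<in>{-q<..}. g x = 0} \<noteq> {}"
      have gm: "g m \<ge> 0"
      proof (rule ccontr)
        assume ng: "\<not> g m \<ge> 0"
        obtain y where y: "-q < y" "g y = 0" using S by auto
        have "g y \<le> g m" using le_m[OF y(1)] .
        thus False using ng y by simp
      qed
      show "TWO g {-q<..} \<or> TOUCH g {-q<..}"
      proof (cases "g m = 0")
        case True
        have R: "{x\<in>{-q<..}. g x = 0} = {m}"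
        proof -
          have "y = m" if y: "-q < y" "g y = 0" for y
            using incm[of y m] decm[of m y] y True by (cases y m rule: linorder_cases) auto
          thus ?thesis using m True by blast
        qed
        have "keeps_sign_at g m" unfolding keeps_sign_at_def
        proof (intro exI[of _ "m + q"] conjI disjI2 ballI)
          fix y assume "y \<in> {m - (m + q)<..<m + (m + q)} - {m}"
          thus "g y < 0" using incm[of y m] decm[of m y] True by (cases y m rule: linorder_cases) auto
        qed (use m in auto)
        moreover have "g' m = 0"
        proof (rule DERIV_local_max[OF gD[OF m]])
          show "0 < m + q" using m by simp
          show "\<forall>y. \<bar>m - y\<bar> < m + q \<longrightarrow> g y \<le> g m" using le_m by auto
        qed
        ultimately have "TOUCH g {-q<..}" unfolding TOUCH_def using R gD[OF m] by auto
        thus ?thesis ..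
      next
        case False
        hence gm': "g m > 0" using gm by simp
        obtain x0 where x0: "-q < x0" "x0 < m" "g x0 = 0" using first_root[OF gm'] by auto
        have "eventually (\<lambda>y. g y < 0) at_top" using lim c0 by (rule order_tendstoD)
        then obtain N where N: "\<And>y. y \<ge> N \<Longrightarrow> g y < 0" by (auto simp: eventually_at_top_linorder)
        define z where "z = max N (m+1)"
        have z: "g z < 0" "m \<le> z" using N by (auto simp: z_def)
        obtain x1 where x1: "m \<le> x1" "x1 \<le> z" "g x1 = 0"
          using IVT2'[of g z 0 m, OF _ _ _ gc[OF m]] z gm' by auto
        have x1m: "m < x1" using x1 gm' by (auto simp: le_less)
        have R: "{x\<in>{-q<..}. g x = 0} = {x0, x1}"
        proof -
          have U: "y = x0 \<or> y = x1" if y: "-q < y" "g y = 0" for y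
          proof (cases "y \<le> m")
            case True thus ?thesis using incm[of y x0] incm[of x0 y] x0 y by (cases y x0 rule: linorder_cases) auto
          next
            case False thus ?thesis using decm[of y x1] decm[of x1 y] x1 x1m y by (cases y x1 rule: linorder_cases) auto
          qed
          show ?thesis
          proof (rule set_eqI, rule iffI)
            fix y assume "y \<in> {x\<in>{-q<..}. g x = 0}"
            hence "-q < y" "g y = 0" by auto
            from U[OF this] show "y \<in> {x0, x1}" by simp
          next
            fix y assume "y \<in> {x0, x1}"
            thus "y \<in> {x\<in>{-q<..}. g x = 0}" using x0 x1 x1m m by auto
          qed
        qed
        have ch1: "changes_sign_at g x1"
        proof -
          have "\<forall>y\<in>{x1 - (x1 - m)<..<x1}. g y > 0" using decm[of _ x1] x1 by auto
          moreover have "\<forall>y\<in>{x1<..<x1 + (x1 - m)}. g y < 0" using decm[of x1] x1 x1m by auto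
          ultimately show ?thesis unfolding changes_sign_at_def using x1m
            by (intro exI[of _ "x1 - m"]) auto
        qed
        have d0: "\<exists>D. DERIV g x0 :> D \<and> D \<noteq> 0" using gD[of x0] up x0 by (intro exI[of _ "g' x0"]) auto
        have d1: "\<exists>D. DERIV g x1 :> D \<and> D \<noteq> 0" using gD[of x1] dn x1m m by (intro exI[of _ "g' x1"]) auto
        have "TWO g {-q<..}" unfolding TWO_def
          using R ch0[OF x0] ch1 d0 d1 x0 x1m by (rule_tac x=x0 in exI, rule_tac x=x1 in exI) simp
        thus ?thesis ..
      qed
    qed
  qed
qed


lemma cs_neg: "changes_sign_at G x0 \<Longrightarrow> changes_sign_at (\<lambda>x. - G x) x0"
  unfolding changes_sign_at_def
proof (elim exE conjE disjE)
  fix e :: real assume e: "e > 0" and a: "\<forall>y\<in>{x0 - e<..<x0}. G y < 0" and b: "\<forall>y\<in>{x0<..<x0 + e}. 0 < G y"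
  show "\<exists>e>0. (\<forall>y\<in>{x0 - e<..<x0}. - G y < 0) \<and> (\<forall>y\<in>{x0<..<x0 + e}. 0 < - G y) \<or>
           (\<forall>y\<in>{x0 - e<..<x0}. 0 < - G y) \<and> (\<forall>y\<in>{x0<..<x0 + e}. - G y < 0)"
    using e a b by (intro exI[of _ e]) auto
next
  fix e :: real assume e: "e > 0" and a: "\<forall>y\<in>{x0 - e<..<x0}. G y > 0" and b: "\<forall>y\<in>{x0<..<x0 + e}. G y < 0"
  show "\<exists>e>0. (\<forall>y\<in>{x0 - e<..<x0}. - G y < 0) \<and> (\<forall>y\<in>{x0<..<x0 + e}. 0 < - G y) \<or>
           (\<forall>y\<in>{x0 - e<..<x0}. 0 < - G y) \<and> (\<forall>y\<in>{x0<..<x0 + e}. - G y < 0)"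
    using e a b by (intro exI[of _ e]) auto
qed

lemma ks_neg: "keeps_sign_at G x0 \<Longrightarrow> keeps_sign_at (\<lambda>x. - G x) x0"
  unfolding keeps_sign_at_def
proof (elim exE conjE disjE)
  fix e :: real assume e: "e > 0" and a: "\<forall>y\<in>{x0 - e<..<x0 + e} - {x0}. 0 < G y"
  show "\<exists>e>0. (\<forall>y\<in>{x0 - e<..<x0 + e} - {x0}. 0 < - G y) \<or> (\<forall>y\<in>{x0 - e<..<x0 + e} - {x0}. - G y < 0)"
    using e a by (intro exI[of _ e]) auto
next
  fix e :: real assume e: "e > 0" and a: "\<forall>y\<in>{x0 - e<..<x0 + e} - {x0}. G y < 0"
  show "\<exists>e>0. (\<forall>y\<in>{x0 - e<..<x0 + e} - {x0}. 0 < - G y) \<or> (\<forall>y\<in>{x0 - e<..<x0 + e} - {x0}. - G y < 0)"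
    using e a by (intro exI[of _ e]) auto
qed

lemma DERIV_neg': "DERIV G x :> D \<Longrightarrow> DERIV (\<lambda>x. - G x) x :> - D"
  by (rule derivative_intros)

lemma roots_neg: fixes G :: "real \<Rightarrow> real" shows "{x\<in>S. - G x = 0} = {x\<in>S. G x = 0}" by simp

lemma ONE_neg: "ONE G S \<Longrightarrow> ONE (\<lambda>x. - G x) S"
  unfolding ONE_def roots_neg
proof (elim exE conjE)
  fix x0 D assume *: "{x \<in> S. G x = 0} = {x0}" "changes_sign_at G x0" "DERIV G x0 :> D" "D \<noteq> 0"
  have "changes_sign_at (\<lambda>x. - G x) x0" by (rule cs_neg[OF *(2)])
  moreover have "\<exists>D. DERIV (\<lambda>x. - G x) x0 :> D \<and> D \<noteq> 0"
    using DERIV_neg'[OF *(3)] *(4) by (intro exI[of _ "- D"]) simp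
  ultimately show "\<exists>x0. {x \<in> S. G x = 0} = {x0} \<and> changes_sign_at (\<lambda>x. - G x) x0 \<and> (\<exists>D. DERIV (\<lambda>x. - G x) x0 :> D \<and> D \<noteq> 0)"
    using *(1) by blast
qed

lemma TWO_neg: "TWO G S \<Longrightarrow> TWO (\<lambda>x. - G x) S"
  unfolding TWO_def roots_neg
proof (elim exE conjE)
  fix x0 x1 D0 D1 assume *: "x0 \<noteq> x1" "{x \<in> S. G x = 0} = {x0, x1}" "changes_sign_at G x0" "changes_sign_at G x1"
    "DERIV G x0 :> D0" "D0 \<noteq> 0" "DERIV G x1 :> D1" "D1 \<noteq> 0"
  have "changes_sign_at (\<lambda>x. - G x) x0" by (rule cs_neg[OF *(3)])
  moreover have "changes_sign_at (\<lambda>x. - G x) x1" by (rule cs_neg[OF *(4)])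
  moreover have "\<exists>D. DERIV (\<lambda>x. - G x) x0 :> D \<and> D \<noteq> 0"
    using DERIV_neg'[OF *(5)] *(6) by (intro exI[of _ "- D0"]) simp
  moreover have "\<exists>D. DERIV (\<lambda>x. - G x) x1 :> D \<and> D \<noteq> 0"
    using DERIV_neg'[OF *(7)] *(8) by (intro exI[of _ "- D1"]) simp
  ultimately show "\<exists>x0 x1. x0 \<noteq> x1 \<and> {x \<in> S. G x = 0} = {x0, x1} \<and> changes_sign_at (\<lambda>x. - G x) x0 \<and> changes_sign_at (\<lambda>x. - G x) x1 \<and>
       (\<exists>D. DERIV (\<lambda>x. - G x) x0 :> D \<and> D \<noteq> 0) \<and> (\<exists>D. DERIV (\<lambda>x. - G x) x1 :> D \<and> D \<noteq> 0)"
    using *(1,2) by blast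
qed

lemma TOUCH_neg: "TOUCH G S \<Longrightarrow> TOUCH (\<lambda>x. - G x) S"
  unfolding TOUCH_def roots_neg
proof (elim exE conjE)
  fix x0 assume *: "{x \<in> S. G x = 0} = {x0}" "keeps_sign_at G x0" "DERIV G x0 :> 0"
  have "keeps_sign_at (\<lambda>x. - G x) x0" by (rule ks_neg[OF *(2)])
  moreover have "DERIV (\<lambda>x. - G x) x0 :> 0" using DERIV_neg'[OF *(3)] by simp
  ultimately show "\<exists>x0. {x \<in> S. G x = 0} = {x0} \<and> keeps_sign_at (\<lambda>x. - G x) x0 \<and> DERIV (\<lambda>x. - G x) x0 :> 0"
    using *(1) by blast
qed

lemma cs_refl:
  assumes "changes_sign_at G x0" shows "changes_sign_at (\<lambda>x. G (- x)) (- x0)"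
proof -
  obtain e where e: "e > 0"
    "((\<forall>y\<in>{x0 - e<..<x0}. G y < 0) \<and> (\<forall>y\<in>{x0<..<x0 + e}. G y > 0)) \<or>
     ((\<forall>y\<in>{x0 - e<..<x0}. G y > 0) \<and> (\<forall>y\<in>{x0<..<x0 + e}. G y < 0))"
    using assms unfolding changes_sign_at_def by blast
  have m1: "-y \<in> {x0<..<x0 + e}" if "y \<in> {- x0 - e<..<- x0}" for y using that by auto
  have m2: "-y \<in> {x0 - e<..<x0}" if "y \<in> {- x0<..<- x0 + e}" for y using that by auto
  from e(2) show ?thesis unfolding changes_sign_at_def
  proof (elim disjE conjE)
    assume a: "\<forall>y\<in>{x0 - e<..<x0}. G y < 0" and b: "\<forall>y\<in>{x0<..<x0 + e}. G y > 0"
    have "\<forall>y\<in>{- x0 - e<..<- x0}. G (- y) > 0" using b m1 by blast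
    moreover have "\<forall>y\<in>{- x0<..<- x0 + e}. G (- y) < 0" using a m2 by blast
    ultimately show "\<exists>e>0. (\<forall>y\<in>{- x0 - e<..<- x0}. G (- y) < 0) \<and> (\<forall>y\<in>{- x0<..<- x0 + e}. 0 < G (- y)) \<or>
      (\<forall>y\<in>{- x0 - e<..<- x0}. 0 < G (- y)) \<and> (\<forall>y\<in>{- x0<..<- x0 + e}. G (- y) < 0)"
      using e(1) by blast
  next
    assume a: "\<forall>y\<in>{x0 - e<..<x0}. G y > 0" and b: "\<forall>y\<in>{x0<..<x0 + e}. G y < 0"
    have "\<forall>y\<in>{- x0 - e<..<- x0}. G (- y) < 0" using b m1 by blast
    moreover have "\<forall>y\<in>{- x0<..<- x0 + e}. G (- y) > 0" using a m2 by blast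
    ultimately show "\<exists>e>0. (\<forall>y\<in>{- x0 - e<..<- x0}. G (- y) < 0) \<and> (\<forall>y\<in>{- x0<..<- x0 + e}. 0 < G (- y)) \<or>
      (\<forall>y\<in>{- x0 - e<..<- x0}. 0 < G (- y)) \<and> (\<forall>y\<in>{- x0<..<- x0 + e}. G (- y) < 0)"
      using e(1) by blast
  qed
qed

lemma ks_refl:
  assumes "keeps_sign_at G x0" shows "keeps_sign_at (\<lambda>x. G (- x)) (- x0)"
proof -
  obtain e where e: "e > 0"
    "(\<forall>y\<in>{x0 - e<..<x0 + e} - {x0}. G y > 0) \<or> (\<forall>y\<in>{x0 - e<..<x0 + e} - {x0}. G y < 0)"
    using assms unfolding keeps_sign_at_def by blast
  have m: "-y \<in> {x0 - e<..<x0 + e} - {x0}" if "y \<in> {- x0 - e<..<- x0 + e} - {- x0}" for y using that by auto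
  from e(2) show ?thesis unfolding keeps_sign_at_def
  proof (elim disjE)
    assume a: "\<forall>y\<in>{x0 - e<..<x0 + e} - {x0}. G y > 0"
    have "\<forall>y\<in>{- x0 - e<..<- x0 + e} - {- x0}. G (- y) > 0" using a m by blast
    thus "\<exists>e>0. (\<forall>y\<in>{- x0 - e<..<- x0 + e} - {- x0}. 0 < G (- y)) \<or> (\<forall>y\<in>{- x0 - e<..<- x0 + e} - {- x0}. G (- y) < 0)"
      using e(1) by blast
  next
    assume a: "\<forall>y\<in>{x0 - e<..<x0 + e} - {x0}. G y < 0"
    have "\<forall>y\<in>{- x0 - e<..<- x0 + e} - {- x0}. G (- y) < 0" using a m by blast
    thus "\<exists>e>0. (\<forall>y\<in>{- x0 - e<..<- x0 + e} - {- x0}. 0 < G (- y)) \<or> (\<forall>y\<in>{- x0 - e<..<- x0 + e} - {- x0}. G (- y) < 0)"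
      using e(1) by blast
  qed
qed

lemma DERIV_refl: fixes G :: "real \<Rightarrow> real" shows "DERIV G x0 :> D \<Longrightarrow> DERIV (\<lambda>x. G (- x)) (- x0) :> - D"
  using DERIV_mirror[where f=G and x="- x0" and y=D] by simp

lemma roots_refl:
  fixes G :: "real \<Rightarrow> real" and r :: real
  assumes "{x\<in>{r<..}. G x = 0} = R"
  shows "{x\<in>{..< -r}. G (- x) = 0} = uminus ` R"
proof -
  have "{x\<in>{..< -r}. G (- x) = 0} = uminus ` {x\<in>{r<..}. G x = 0}"
  proof (rule set_eqI)
    fix x show "x \<in> {x\<in>{..< -r}. G (- x) = 0} \<longleftrightarrow> x \<in> uminus ` {x\<in>{r<..}. G x = 0}"
    proof
      assume "x \<in> {x\<in>{..< -r}. G (- x) = 0}"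
      hence "- x \<in> {x\<in>{r<..}. G x = 0}" by auto
      thus "x \<in> uminus ` {x\<in>{r<..}. G x = 0}" by (rule image_eqI[rotated]) simp
    qed auto
  qed
  thus ?thesis using assms by simp
qed

lemma ONE_refl: "ONE G {r<..} \<Longrightarrow> ONE (\<lambda>x. G (- x)) {..< -r}"
  unfolding ONE_def
proof (elim exE conjE)
  fix x0 D assume *: "{x \<in> {r<..}. G x = 0} = {x0}" "changes_sign_at G x0" "DERIV G x0 :> D" "D \<noteq> 0"
  show "\<exists>x0. {x \<in> {..< -r}. G (- x) = 0} = {x0} \<and> changes_sign_at (\<lambda>x. G (- x)) x0 \<and> (\<exists>D. DERIV (\<lambda>x. G (- x)) x0 :> D \<and> D \<noteq> 0)"
  proof (rule exI[of _ "- x0"], intro conjI)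
    show "{x \<in> {..< -r}. G (- x) = 0} = {- x0}" using roots_refl[OF *(1)] by simp
    show "changes_sign_at (\<lambda>x. G (- x)) (- x0)" by (rule cs_refl[OF *(2)])
    show "\<exists>D. DERIV (\<lambda>x. G (- x)) (- x0) :> D \<and> D \<noteq> 0"
      using DERIV_refl[OF *(3)] *(4) by (intro exI[of _ "- D"]) simp
  qed
qed

lemma NONE_refl: fixes G :: "real \<Rightarrow> real" shows "{x\<in>{r<..}. G x = 0} = {} \<Longrightarrow> {x\<in>{..< -r}. G (- x) = 0} = {}"
  using roots_refl[of r G "{}"] by simp


lemma key:
  fixes f1 f2 :: "real \<Rightarrow> real" and a1 a2 b1 b2 c1 c2 :: real
  assumes sh1: "strongly_hyperbolic f1" and sh2: "strongly_hyperbolic f2"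
    and a: "a1 > 0" "a2 > 0" and b: "b1 \<noteq> b2" and c: "c1 \<noteq> c2"
    and ne: "{x\<in>{max (-b1) (-b2)<..}. fcheck f1 a1 a2 b1 b2 c1 c2 x = 0} \<noteq> {}"
  shows "(ONE (fcheck f1 a1 a2 b1 b2 c1 c2) {max (-b1) (-b2)<..} \<and> ONE (fhat f2 a1 a2 b1 b2 c1 c2) {..<min (-b1) (-b2)})
       \<or> ((TWO (fcheck f1 a1 a2 b1 b2 c1 c2) {max (-b1) (-b2)<..} \<or> TOUCH (fcheck f1 a1 a2 b1 b2 c1 c2) {max (-b1) (-b2)<..})
           \<and> {x\<in>{..<min (-b1) (-b2)}. fhat f2 a1 a2 b1 b2 c1 c2 x = 0} = {})"
proof (cases "b2 < b1")
  case True
  have hFC: "fcheck f1 a1 a2 b1 b2 c1 c2 = gf f1 a1 a2 b1 b2 (c1 - c2)"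
    by (rule ext) (simp add: fcheck_def gf_def)
  have hFH: "fhat f2 a1 a2 b1 b2 c1 c2 = (\<lambda>x. gf f2 a2 a1 (-b2) (-b1) (c1 - c2) (- x))"
    by (rule ext) (simp add: fhat_def gf_def)
  have mx: "max (-b1) (-b2) = -b2" and mn: "min (-b1) (-b2) = -b1" using True by auto
  have ne': "{x\<in>{-b2<..}. gf f1 a1 a2 b1 b2 (c1 - c2) x = 0} \<noteq> {}" using ne hFC mx by simp
  note C1 = core[OF sh1, where q=b2 and p=b1 and A=a1 and B=a2 and c="c1-c2"]
  note C2 = core[OF sh2, where q="-b1" and p="-b2" and A=a2 and B=a1 and c="c1-c2"]
  show ?thesis
  proof (cases "c2 < c1")
    case True
    have "ONE (gf f1 a1 a2 b1 b2 (c1 - c2)) {-b2<..}" using C1 \<open>b2 < b1\<close> a True by simp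
    moreover have "ONE (gf f2 a2 a1 (-b2) (-b1) (c1 - c2)) {- (-b1)<..}" using C2 \<open>b2 < b1\<close> a True by simp
    from ONE_refl[OF this] have "ONE (\<lambda>x. gf f2 a2 a1 (-b2) (-b1) (c1 - c2) (- x)) {..< -b1}" by simp
    ultimately show ?thesis unfolding hFC hFH mx mn by blast
  next
    case False
    hence cl: "c1 - c2 < 0" using c by simp
    have "TWO (gf f1 a1 a2 b1 b2 (c1 - c2)) {-b2<..} \<or> TOUCH (gf f1 a1 a2 b1 b2 (c1 - c2)) {-b2<..}"
      using C1 \<open>b2 < b1\<close> a cl ne' by simp
    moreover have "a2 \<le> a1"
    proof (rule ccontr)
      assume "\<not> a2 \<le> a1"
      hence "a1 \<le> a2" by simp
      from core_none[OF sh1 \<open>b2 < b1\<close> this a(2) cl] ne' show False by simp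
    qed
    from core_none[OF sh2 _ this a(1) cl, where q="-b1" and p="-b2"] \<open>b2 < b1\<close>
    have "{x\<in>{- (-b1)<..}. gf f2 a2 a1 (-b2) (-b1) (c1 - c2) x = 0} = {}" by simp
    from NONE_refl[OF this] have "{x\<in>{..< -b1}. gf f2 a2 a1 (-b2) (-b1) (c1 - c2) (- x) = 0} = {}" by simp
    ultimately show ?thesis unfolding hFC hFH mx mn by blast
  qed
next
  case False
  hence lt: "b1 < b2" using b by simp
  have hFC: "fcheck f1 a1 a2 b1 b2 c1 c2 = (\<lambda>x. - gf f1 a2 a1 b2 b1 (c2 - c1) x)"
    by (rule ext) (simp add: fcheck_def gf_def)
  have hFH: "fhat f2 a1 a2 b1 b2 c1 c2 = (\<lambda>x. - gf f2 a1 a2 (-b1) (-b2) (c2 - c1) (- x))"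
    by (rule ext) (simp add: fhat_def gf_def)
  have mx: "max (-b1) (-b2) = -b1" and mn: "min (-b1) (-b2) = -b2" using lt by auto
  have ne': "{x\<in>{-b1<..}. gf f1 a2 a1 b2 b1 (c2 - c1) x = 0} \<noteq> {}" using ne hFC mx by simp
  note C1 = core[OF sh1, where q=b1 and p=b2 and A=a2 and B=a1 and c="c2-c1"]
  note C2 = core[OF sh2, where q="-b2" and p="-b1" and A=a1 and B=a2 and c="c2-c1"]
  show ?thesis
  proof (cases "c1 < c2")
    case True
    have "ONE (gf f1 a2 a1 b2 b1 (c2 - c1)) {-b1<..}" using C1 lt a True by simp
    from ONE_neg[OF this] have 1: "ONE (\<lambda>x. - gf f1 a2 a1 b2 b1 (c2 - c1) x) {-b1<..}" .
    have "ONE (gf f2 a1 a2 (-b1) (-b2) (c2 - c1)) {- (-b2)<..}" using C2 lt a True by simp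
    from ONE_refl[OF this] have "ONE (\<lambda>x. gf f2 a1 a2 (-b1) (-b2) (c2 - c1) (- x)) {..< -b2}" by simp
    from ONE_neg[OF this] have 2: "ONE (\<lambda>x. - gf f2 a1 a2 (-b1) (-b2) (c2 - c1) (- x)) {..< -b2}" by simp
    show ?thesis unfolding hFC hFH mx mn using 1 2 by blast
  next
    case False
    hence cl: "c2 - c1 < 0" using c by simp
    have "TWO (gf f1 a2 a1 b2 b1 (c2 - c1)) {-b1<..} \<or> TOUCH (gf f1 a2 a1 b2 b1 (c2 - c1)) {-b1<..}"
      using C1 lt a cl ne' by simp
    hence 1: "TWO (\<lambda>x. - gf f1 a2 a1 b2 b1 (c2 - c1) x) {-b1<..} \<or> TOUCH (\<lambda>x. - gf f1 a2 a1 b2 b1 (c2 - c1) x) {-b1<..}"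
      using TWO_neg TOUCH_neg by blast
    have "a1 \<le> a2"
    proof (rule ccontr)
      assume "\<not> a1 \<le> a2"
      hence "a2 \<le> a1" by simp
      from core_none[OF sh1 lt this a(1) cl] ne' show False by simp
    qed
    from core_none[OF sh2 _ this a(2) cl, where q="-b2" and p="-b1"] lt
    have "{x\<in>{- (-b2)<..}. gf f2 a1 a2 (-b1) (-b2) (c2 - c1) x = 0} = {}" by simp
    from NONE_refl[OF this] have "{x\<in>{..< -b2}. gf f2 a1 a2 (-b1) (-b2) (c2 - c1) (- x) = 0} = {}" by simp
    hence 2: "{x\<in>{..< -b2}. - gf f2 a1 a2 (-b1) (-b2) (c2 - c1) (- x) = 0} = {}" by simp
    show ?thesis unfolding hFC hFH mx mn using 1 2 by blast
  qed
qed

theorem lemma3p7: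
  fixes f1 f2 :: "real \<Rightarrow> real" and a1 a2 b1 b2 c1 c2 :: real
  assumes "strongly_hyperbolic f1" and "strongly_hyperbolic f2"
    and "a1 > 0" and "a2 > 0"
    and "b1 \<noteq> b2" and "c1 \<noteq> c2"
    and "fcheck_roots f1 a1 a2 b1 b2 c1 c2 \<noteq> {}"
  defines "P1 \<equiv> (\<exists>x0 x1. x0 \<noteq> x1 \<and> fcheck_roots f1 a1 a2 b1 b2 c1 c2 = {x0, x1}
              \<and> changes_sign_at (fcheck f1 a1 a2 b1 b2 c1 c2) x0
              \<and> changes_sign_at (fcheck f1 a1 a2 b1 b2 c1 c2) x1
              \<and> fhat_roots f2 a1 a2 b1 b2 c1 c2 = {}
              \<and> deriv (fcheck f1 a1 a2 b1 b2 c1 c2) x0 \<noteq> 0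
              \<and> deriv (fcheck f1 a1 a2 b1 b2 c1 c2) x1 \<noteq> 0)"
    and "P2 \<equiv> (\<exists>x0. fcheck_roots f1 a1 a2 b1 b2 c1 c2 = {x0}
              \<and> keeps_sign_at (fcheck f1 a1 a2 b1 b2 c1 c2) x0
              \<and> fhat_roots f2 a1 a2 b1 b2 c1 c2 = {}
              \<and> deriv (fcheck f1 a1 a2 b1 b2 c1 c2) x0 = 0)"
    and "P3 \<equiv> (\<exists>x0 x1. fcheck_roots f1 a1 a2 b1 b2 c1 c2 = {x0}
              \<and> changes_sign_at (fcheck f1 a1 a2 b1 b2 c1 c2) x0
              \<and> fhat_roots f2 a1 a2 b1 b2 c1 c2 = {x1}
              \<and> changes_sign_at (fhat f2 a1 a2 b1 b2 c1 c2) x1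
              \<and> deriv (fcheck f1 a1 a2 b1 b2 c1 c2) x0 \<noteq> 0
              \<and> deriv (fhat f2 a1 a2 b1 b2 c1 c2) x1 \<noteq> 0)"
  shows "(P1 \<and> \<not> P2 \<and> \<not> P3) \<or> (\<not> P1 \<and> P2 \<and> \<not> P3) \<or> (\<not> P1 \<and> \<not> P2 \<and> P3)"
proof -
  define FC where "FC = fcheck f1 a1 a2 b1 b2 c1 c2"
  define FH where "FH = fhat f2 a1 a2 b1 b2 c1 c2"
  have RC: "fcheck_roots f1 a1 a2 b1 b2 c1 c2 = {x\<in>{max (-b1) (-b2)<..}. FC x = 0}"
    by (auto simp: fcheck_roots_def FC_def)
  have RH: "fhat_roots f2 a1 a2 b1 b2 c1 c2 = {x\<in>{..<min (-b1) (-b2)}. FH x = 0}"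
    by (auto simp: fhat_roots_def FH_def)
  have ne: "{x\<in>{max (-b1) (-b2)<..}. fcheck f1 a1 a2 b1 b2 c1 c2 x = 0} \<noteq> {}"
    using assms(7) RC by (simp add: FC_def)
  have K: "(ONE FC {max (-b1) (-b2)<..} \<and> ONE FH {..<min (-b1) (-b2)})
       \<or> ((TWO FC {max (-b1) (-b2)<..} \<or> TOUCH FC {max (-b1) (-b2)<..})
           \<and> {x\<in>{..<min (-b1) (-b2)}. FH x = 0} = {})"
    using key[OF assms(1-6) ne] unfolding FC_def FH_def .
  have P1: "P1 \<longleftrightarrow> (\<exists>x0 x1. x0 \<noteq> x1 \<and> fcheck_roots f1 a1 a2 b1 b2 c1 c2 = {x0, x1}
              \<and> changes_sign_at FC x0 \<and> changes_sign_at FC x1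
              \<and> fhat_roots f2 a1 a2 b1 b2 c1 c2 = {}
              \<and> deriv FC x0 \<noteq> 0 \<and> deriv FC x1 \<noteq> 0)"
    unfolding assms(8) FC_def ..
  have P2: "P2 \<longleftrightarrow> (\<exists>x0. fcheck_roots f1 a1 a2 b1 b2 c1 c2 = {x0}
              \<and> keeps_sign_at FC x0
              \<and> fhat_roots f2 a1 a2 b1 b2 c1 c2 = {}
              \<and> deriv FC x0 = 0)"
    unfolding assms(9) FC_def ..
  have P3: "P3 \<longleftrightarrow> (\<exists>x0 x1. fcheck_roots f1 a1 a2 b1 b2 c1 c2 = {x0}
              \<and> changes_sign_at FC x0
              \<and> fhat_roots f2 a1 a2 b1 b2 c1 c2 = {x1}
              \<and> changes_sign_at FH x1
              \<and> deriv FC x0 \<noteq> 0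
              \<and> deriv FH x1 \<noteq> 0)"
    unfolding assms(10) FC_def FH_def ..
  have nP1: "\<not> P1" if "fcheck_roots f1 a1 a2 b1 b2 c1 c2 = {y}" for y
  proof
    assume P1 then obtain x0 x1 where "x0 \<noteq> x1" "fcheck_roots f1 a1 a2 b1 b2 c1 c2 = {x0, x1}"
      unfolding P1 by blast
    thus False using that by (metis doubleton_eq_iff insert_absorb2)
  qed
  have nP2: "\<not> P2" if "fhat_roots f2 a1 a2 b1 b2 c1 c2 \<noteq> {}" using that unfolding P2 by blast
  have nP2': "\<not> P2" if "x0 \<noteq> x1" "fcheck_roots f1 a1 a2 b1 b2 c1 c2 = {x0, x1}" for x0 x1
  proof
    assume P2 then obtain y where "fcheck_roots f1 a1 a2 b1 b2 c1 c2 = {y}" unfolding P2 by blast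
    thus False using that by (metis doubleton_eq_iff insert_absorb2)
  qed
  have nP3: "\<not> P3" if "fhat_roots f2 a1 a2 b1 b2 c1 c2 = {}" using that unfolding P3 by blast
  from K show ?thesis
  proof (elim disjE conjE)
    assume o1: "ONE FC {max (-b1) (-b2)<..}" and o2: "ONE FH {..<min (-b1) (-b2)}"
    from o1 obtain x0 D0 where x0: "{x\<in>{max (-b1) (-b2)<..}. FC x = 0} = {x0}" "changes_sign_at FC x0"
      "DERIV FC x0 :> D0" "D0 \<noteq> 0" unfolding ONE_def by blast
    from o2 obtain x1 D1 where x1: "{x\<in>{..<min (-b1) (-b2)}. FH x = 0} = {x1}" "changes_sign_at FH x1"
      "DERIV FH x1 :> D1" "D1 \<noteq> 0" unfolding ONE_def by blast
    have "P3" unfolding P3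
      using x0 x1 RC RH DERIV_imp_deriv[OF x0(3)] DERIV_imp_deriv[OF x1(3)] by auto
    moreover have "\<not> P1" using nP1[of x0] x0 RC by simp
    moreover have "fhat_roots f2 a1 a2 b1 b2 c1 c2 = {x1}" using x1(1) RH by simp
    hence "\<not> P2" using nP2 by simp
    ultimately show ?thesis by blast
  next
    assume t: "TWO FC {max (-b1) (-b2)<..}" and n: "{x\<in>{..<min (-b1) (-b2)}. FH x = 0} = {}"
    from t obtain x0 x1 D0 D1 where x: "x0 \<noteq> x1" "{x\<in>{max (-b1) (-b2)<..}. FC x = 0} = {x0, x1}"
      "changes_sign_at FC x0" "changes_sign_at FC x1"
      "DERIV FC x0 :> D0" "D0 \<noteq> 0" "DERIV FC x1 :> D1" "D1 \<noteq> 0" unfolding TWO_def by blast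
    have "P1" unfolding P1
      using x n RC RH DERIV_imp_deriv[OF x(5)] DERIV_imp_deriv[OF x(7)] by auto
    moreover have "\<not> P2" using nP2'[of x0 x1] x RC by simp
    moreover have "\<not> P3" using nP3 n RH by simp
    ultimately show ?thesis by blast
  next
    assume t: "TOUCH FC {max (-b1) (-b2)<..}" and n: "{x\<in>{..<min (-b1) (-b2)}. FH x = 0} = {}"
    from t obtain x0 where x: "{x\<in>{max (-b1) (-b2)<..}. FC x = 0} = {x0}" "keeps_sign_at FC x0"
      "DERIV FC x0 :> 0" unfolding TOUCH_def by blast
    have "P2" unfolding P2
      using x n RC RH DERIV_imp_deriv[OF x(3)] by auto
    moreover have "\<not> P1" using nP1[of x0] x RC by simp
    moreover have "\<not> P3" using nP3 n RH by simp
    ultimately show ?thesis by blast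
  qed
qed

end
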